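(* Let $p,p'\in(0,1/2)$ be constants with $p'<p$. For every two-sided $p$-error PACA $C$ with constant time complexity $T=O(1)$ there is a two-sided $p'$-error PACA $C'$ with time complexity $O(T)=O(1)$ such that $L(C)=L(C')$.
   Context: PACA: a bounded one-dimensional CA with state set $Q$, input alphabet $\Sigma\subseteq Q$, accepting states $A\subseteq Q$, boundary symbol $\$$ and two local transition functions $\delta_0,\delta_1$; at each step every cell independently tosses a fair coin $c$ and updates by $\delta_c$ applied to its left neighbor, itself and its right neighbor ($\$$ beyond borders). On input $x\in\Sigma^n$, a computation is accepting if at some step all cells are simultaneously in $A$. $C$ has time complexity $T$ if every accepting computation on inputs of length $n$ first reaches $A^n$ at a step $<T(n)$. For $p<1/2$, $C$ is a two-sided $p$-error PACA for $L$ if for every input $x$: $x\in L\iff\Pr[C\text{ accepts }x]\ge1-p$ and $x\notin L\iff\Pr[C\text{ accepts }x]\le p$; then $L(C)=L$. *)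

theory Defs
  imports Main "HOL-Library.Landau_Symbols"
begin

text \<open>States are drawn from the natural numbers; a PACA specifies its finite state set Q.
  The boundary symbol is represented by None (neighbour values have type nat option).\<close>

record paca =
  Q     :: "nat set"
  Sigma :: "nat set"
  Acc   :: "nat set"
  delta0 :: "nat option \<Rightarrow> nat \<Rightarrow> nat option \<Rightarrow> nat"
  delta1 :: "nat option \<Rightarrow> nat \<Rightarrow> nat option \<Rightarrow> nat"

definition is_paca :: "paca \<Rightarrow> bool" where
  "is_paca C \<longleftrightarrow> finite (Q C) \<and> Sigma C \<subseteq> Q C \<and> Acc C \<subseteq> Q C \<and>
     (\<forall>l c r. c \<in> Q C \<longrightarrow> l \<in> insert None (Some ` Q C) \<longrightarrow> r \<in> insert None (Some ` Q C) \<longrightarrow>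
        delta0 C l c r \<in> Q C \<and> delta1 C l c r \<in> Q C)"

text \<open>One synchronous step; b ! i is the coin of cell i (False = 0, True = 1).\<close>
definition step :: "paca \<Rightarrow> nat list \<Rightarrow> bool list \<Rightarrow> nat list" where
  "step C c b = map (\<lambda>i. (if b ! i then delta1 C else delta0 C)
        (if i = 0 then None else Some (c ! (i - 1)))
        (c ! i)
        (if i + 1 < length c then Some (c ! (i + 1)) else None)) [0..<length c]"

fun conf :: "paca \<Rightarrow> nat list \<Rightarrow> bool list list \<Rightarrow> nat list" where
  "conf C c [] = c"
| "conf C c (b # bs) = conf C (step C c b) bs"

definition all_acc :: "paca \<Rightarrow> nat list \<Rightarrow> bool" where
  "all_acc C c \<longleftrightarrow> set c \<subseteq> Acc C"

definition coin_seqs :: "nat \<Rightarrow> nat \<Rightarrow> bool list list set" where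
  "coin_seqs n t = {cs. length cs = t \<and> (\<forall>b\<in>set cs. length b = n)}"

definition prob_within :: "paca \<Rightarrow> nat list \<Rightarrow> nat \<Rightarrow> real" where
  "prob_within C x t =
     real (card {cs \<in> coin_seqs (length x) t. \<exists>k\<le>t. all_acc C (conf C x (take k cs))})
       / 2 ^ (length x * t)"

text \<open>Probability of acceptance = probability that some step has all cells accepting
  (limit of the increasing finite-horizon probabilities).\<close>
definition prob_accept :: "paca \<Rightarrow> nat list \<Rightarrow> real" where
  "prob_accept C x = (SUP t. prob_within C x t)"

definition has_time :: "paca \<Rightarrow> (nat \<Rightarrow> nat) \<Rightarrow> bool" where
  "has_time C T \<longleftrightarrow> (\<forall>x cs. set x \<subseteq> Sigma C \<longrightarrow> cs \<in> coin_seqs (length x) (length cs) \<longrightarrow>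
       all_acc C (conf C x cs) \<longrightarrow> (\<forall>k<length cs. \<not> all_acc C (conf C x (take k cs))) \<longrightarrow>
       length cs < T (length x))"

definition two_sided :: "paca \<Rightarrow> real \<Rightarrow> nat list set \<Rightarrow> bool" where
  "two_sided C p L \<longleftrightarrow> L \<subseteq> lists (Sigma C) \<and>
     (\<forall>x \<in> lists (Sigma C). (x \<in> L \<longleftrightarrow> prob_accept C x \<ge> 1 - p) \<and>
                            (x \<notin> L \<longleftrightarrow> prob_accept C x \<le> p))"

end

theory Submission
  imports Defs "HOL-Library.Nat_Bijection"
begin

lemma finite_coin_seqs: "finite (coin_seqs n t)"
proof -
  have "coin_seqs n t \<subseteq> {cs. set cs \<subseteq> {b. set b \<subseteq> (UNIV::bool set) \<and> length b = n} \<and> length cs = t}"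
    unfolding coin_seqs_def by auto
  moreover have "finite {cs. set cs \<subseteq> {b. set b \<subseteq> (UNIV::bool set) \<and> length b = n} \<and> length cs = t}"
    by (intro finite_lists_length_eq finite_lists_length_eq) auto
  ultimately show ?thesis by (rule finite_subset)
qed

lemma card_coin_seqs: "card (coin_seqs n t) = 2 ^ (n * t)"
proof -
  have "coin_seqs n t = {cs. set cs \<subseteq> {b. set b \<subseteq> (UNIV::bool set) \<and> length b = n} \<and> length cs = t}"
    unfolding coin_seqs_def by auto
  moreover have "card {b. set b \<subseteq> (UNIV::bool set) \<and> length b = n} = 2 ^ n"
    using card_lists_length_eq[of "UNIV::bool set" n] by simp
  moreover have "finite {b. set b \<subseteq> (UNIV::bool set) \<and> length b = n}"
    using finite_lists_length_eq[of "UNIV::bool set" n] by simp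
  ultimately show ?thesis
    using card_lists_length_eq[of "{b. set b \<subseteq> (UNIV::bool set) \<and> length b = n}" t]
    by (simp add: power_mult)
qed

lemma coin_seqs_append:
  "{cs \<in> coin_seqs n (t + d). P (take t cs)} = (\<lambda>(a, b). a @ b) ` ({a \<in> coin_seqs n t. P a} \<times> coin_seqs n d)"
proof (intro set_eqI iffI)
  fix cs assume cs: "cs \<in> {cs \<in> coin_seqs n (t + d). P (take t cs)}"
  have 1: "take t cs \<in> {a \<in> coin_seqs n t. P a}" using cs
    by (auto simp: coin_seqs_def dest: in_set_takeD)
  have 2: "drop t cs \<in> coin_seqs n d" using cs
    by (auto simp: coin_seqs_def dest: in_set_dropD)
  have "cs = (\<lambda>(a, b). a @ b) (take t cs, drop t cs)" by simp
  then show "cs \<in> (\<lambda>(a, b). a @ b) ` ({a \<in> coin_seqs n t. P a} \<times> coin_seqs n d)"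
    using 1 2 by blast
next
  fix cs assume "cs \<in> (\<lambda>(a, b). a @ b) ` ({a \<in> coin_seqs n t. P a} \<times> coin_seqs n d)"
  then show "cs \<in> {cs \<in> coin_seqs n (t + d). P (take t cs)}"
    by (auto simp: coin_seqs_def)
qed

lemma card_coin_seqs_take:
  "card {cs \<in> coin_seqs n (t + d). P (take t cs)} = card {a \<in> coin_seqs n t. P a} * 2 ^ (n * d)"
proof -
  have inj: "inj_on (\<lambda>(a, b). a @ b) ({a \<in> coin_seqs n t. P a} \<times> coin_seqs n d)"
    by (auto simp: inj_on_def coin_seqs_def)
  show ?thesis
    unfolding coin_seqs_append card_image[OF inj]
    by (simp add: card_cartesian_product card_coin_seqs)
qed

definition ev :: "paca \<Rightarrow> nat list \<Rightarrow> nat \<Rightarrow> bool list list \<Rightarrow> bool" where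
  "ev C x t cs \<longleftrightarrow> (\<exists>k\<le>t. all_acc C (conf C x (take k cs)))"

lemma prob_within_ev: "prob_within C x t = real (card {cs \<in> coin_seqs (length x) t. ev C x t cs}) / 2 ^ (length x * t)"
  unfolding prob_within_def ev_def by simp

lemma ev_take: "ev C x t (take t cs) \<Longrightarrow> ev C x (t + d) cs"
  unfolding ev_def
proof (elim exE conjE)
  fix k assume "k \<le> t" "all_acc C (conf C x (take k (take t cs)))"
  then show "\<exists>k\<le>t + d. all_acc C (conf C x (take k cs))"
    by (intro exI[of _ k]) (simp add: min_def)
qed

lemma prob_within_mono: "prob_within C x t \<le> prob_within C x (t + d)"
proof -
  let ?n = "length x"
  let ?A = "card {cs \<in> coin_seqs ?n t. ev C x t cs}"
  let ?B = "card {cs \<in> coin_seqs ?n (t + d). ev C x (t+d) cs}"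
  have "card {cs \<in> coin_seqs ?n (t + d). ev C x t (take t cs)} \<le> ?B"
    by (rule card_mono) (auto simp: finite_coin_seqs ev_take)
  then have "?A * 2 ^ (?n * d) \<le> ?B"
    using card_coin_seqs_take[of ?n t d "ev C x t"] by simp
  then have "real (?A * 2 ^ (?n * d)) \<le> real ?B" by (simp only: of_nat_le_iff)
  then have 1: "real ?A * 2 ^ (?n * d) \<le> real ?B" by simp
  have X: "(2::real) ^ (?n * (t + d)) = 2 ^ (?n * t) * 2 ^ (?n * d)"
    by (simp add: power_add add_mult_distrib2)
  have "real ?A / 2 ^ (?n * t) = real ?A * 2 ^ (?n * d) / 2 ^ (?n * (t + d))"
    unfolding X by simp
  also have "\<dots> \<le> real ?B / 2 ^ (?n * (t + d))"
    using 1 by (simp add: divide_right_mono)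
  finally show ?thesis unfolding prob_within_ev .
qed

lemma prob_within_stable:
  assumes h: "\<And>cs. cs \<in> coin_seqs (length x) (length cs) \<Longrightarrow> all_acc C (conf C x cs) \<Longrightarrow>
              \<exists>k\<le>t0. k \<le> length cs \<and> all_acc C (conf C x (take k cs))"
    and "t0 \<le> t"
  shows "prob_within C x t = prob_within C x t0"
proof -
  let ?n = "length x"
  obtain d where t: "t = t0 + d" using assms(2) le_Suc_ex by blast
  have eq: "ev C x (t0+d) cs = ev C x t0 (take t0 cs)" if cs: "cs \<in> coin_seqs ?n (t0 + d)" for cs
  proof
    assume "ev C x (t0 + d) cs"
    then obtain k where k: "k \<le> t0 + d" "all_acc C (conf C x (take k cs))" unfolding ev_def by auto
    have "take k cs \<in> coin_seqs ?n (length (take k cs))" using cs unfolding coin_seqs_def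
      by (auto dest: in_set_takeD)
    from h[OF this k(2)] obtain k' where k': "k' \<le> t0" "k' \<le> length (take k cs)"
       "all_acc C (conf C x (take k' (take k cs)))" by blast
    have "k' \<le> k" using k'(2) by simp
    then have "take k' (take k cs) = take k' (take t0 cs)" using k'(1) by (simp add: min_def)
    then show "ev C x t0 (take t0 cs)" unfolding ev_def using k' by metis
  next
    assume "ev C x t0 (take t0 cs)"
    then show "ev C x (t0 + d) cs" by (rule ev_take)
  qed
  have "{cs \<in> coin_seqs ?n (t0 + d). ev C x (t0+d) cs} = {cs \<in> coin_seqs ?n (t0 + d). ev C x t0 (take t0 cs)}"
    using eq by blast
  then have c: "card {cs \<in> coin_seqs ?n (t0 + d). ev C x (t0+d) cs} = card {cs \<in> coin_seqs ?n t0. ev C x t0 cs} * 2 ^ (?n * d)"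
    using card_coin_seqs_take[of ?n t0 d "ev C x t0"] by simp
  have X: "(2::real) ^ (?n * (t0 + d)) = 2 ^ (?n * t0) * 2 ^ (?n * d)"
    by (simp add: power_add add_mult_distrib2)
  show ?thesis unfolding prob_within_ev t c X by simp
qed

lemma prob_accept_eq:
  assumes "\<And>t. t0 \<le> t \<Longrightarrow> prob_within C x t = prob_within C x t0"
  shows "prob_accept C x = prob_within C x t0"
  unfolding prob_accept_def
proof (rule cSup_eq_maximum)
  show "prob_within C x t0 \<in> range (prob_within C x)" by simp
  fix y assume "y \<in> range (prob_within C x)"
  then obtain t where y: "y = prob_within C x t" by auto
  show "y \<le> prob_within C x t0"
  proof (cases "t \<le> t0")
    case True then obtain d where "t0 = t + d" using le_Suc_ex by blast
    then show ?thesis using y prob_within_mono by simp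
  next
    case False then have "prob_within C x t = prob_within C x t0" using assms[of t] by simp
    then show ?thesis using y by simp
  qed
qed

lemma card_coin_seqs_split:
  "card {cs \<in> coin_seqs n (t + d). R (take t cs) (drop t cs)} = (\<Sum>a\<in>coin_seqs n t. card {c \<in> coin_seqs n d. R a c})"
proof -
  have eq: "{cs \<in> coin_seqs n (t + d). R (take t cs) (drop t cs)} = (\<Union>a\<in>coin_seqs n t. (\<lambda>c. a @ c) ` {c \<in> coin_seqs n d. R a c})"
  proof (intro set_eqI iffI)
    fix cs assume cs: "cs \<in> {cs \<in> coin_seqs n (t + d). R (take t cs) (drop t cs)}"
    have 1: "take t cs \<in> coin_seqs n t" using cs by (auto simp: coin_seqs_def dest: in_set_takeD)
    have 2: "drop t cs \<in> {c \<in> coin_seqs n d. R (take t cs) c}" using cs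
      by (auto simp: coin_seqs_def dest: in_set_dropD)
    have "cs = take t cs @ drop t cs" by simp
    then show "cs \<in> (\<Union>a\<in>coin_seqs n t. (\<lambda>c. a @ c) ` {c \<in> coin_seqs n d. R a c})"
      using 1 2 by blast
  next
    fix cs assume "cs \<in> (\<Union>a\<in>coin_seqs n t. (\<lambda>c. a @ c) ` {c \<in> coin_seqs n d. R a c})"
    then obtain a c where "a \<in> coin_seqs n t" "c \<in> coin_seqs n d" "R a c" "cs = a @ c" by blast
    then show "cs \<in> {cs \<in> coin_seqs n (t + d). R (take t cs) (drop t cs)}"
      by (auto simp: coin_seqs_def)
  qed
  show ?thesis unfolding eq
  proof (subst card_UN_disjoint)
    show "finite (coin_seqs n t)" by (rule finite_coin_seqs)
    show "\<forall>a\<in>coin_seqs n t. finite ((\<lambda>c. a @ c) ` {c \<in> coin_seqs n d. R a c})"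
      using finite_coin_seqs by auto
    show "\<forall>a\<in>coin_seqs n t. \<forall>b\<in>coin_seqs n t. a \<noteq> b \<longrightarrow>
      (\<lambda>c. a @ c) ` {c \<in> coin_seqs n d. R a c} \<inter> (\<lambda>c. b @ c) ` {c \<in> coin_seqs n d. R b c} = {}"
      by (auto simp: coin_seqs_def)
    show "(\<Sum>a\<in>coin_seqs n t. card ((\<lambda>c. a @ c) ` {c \<in> coin_seqs n d. R a c})) =
          (\<Sum>a\<in>coin_seqs n t. card {c \<in> coin_seqs n d. R a c})"
      by (intro sum.cong refl card_image) (auto simp: inj_on_def)
  qed
qed

definition blkj :: "nat \<Rightarrow> 'a list \<Rightarrow> nat \<Rightarrow> 'a list" where
  "blkj E cs j = take E (drop (j * E) cs)"

definition cntP :: "('a list \<Rightarrow> bool) \<Rightarrow> nat \<Rightarrow> nat \<Rightarrow> 'a list \<Rightarrow> nat" where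
  "cntP P E m cs = card {j. j < m \<and> P (blkj E cs j)}"

lemma cntP_le: "cntP P E m cs \<le> m"
proof -
  have "card {j. j < m \<and> P (blkj E cs j)} \<le> card {..<m}" by (rule card_mono) auto
  then show ?thesis unfolding cntP_def by simp
qed

lemma cntP_Suc:
  assumes "length b = E"
  shows "cntP P E (Suc m) (b @ c) = (if P b then 1 else 0) + cntP P E m c"
proof -
  have b0: "blkj E (b @ c) 0 = b" using assms by (simp add: blkj_def)
  have bS: "blkj E (b @ c) (Suc j) = blkj E c j" for j using assms by (simp add: blkj_def)
  have eq: "{j. j < Suc m \<and> P (blkj E (b @ c) j)} = (if P b then {0} else {}) \<union> Suc ` {j. j < m \<and> P (blkj E c j)}"
    by (auto simp: b0 bS less_Suc_eq_0_disj)
  have "card ((if P b then {0} else {}) \<union> Suc ` {j. j < m \<and> P (blkj E c j)}) =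
        card (if P b then {0::nat} else {}) + card (Suc ` {j. j < m \<and> P (blkj E c j)})"
    by (rule card_Un_disjoint) auto
  then show ?thesis unfolding cntP_def eq by (simp add: card_image)
qed

lemma pascal_step:
  fixes G B :: nat
  shows "G * (if k = 0 then 0 else (m choose (k - 1)) * G ^ (k - 1) * B ^ (m - (k - 1))) + B * ((m choose k) * G ^ k * B ^ (m - k))
     = (Suc m choose k) * G ^ k * B ^ (Suc m - k)"
proof (cases k)
  case 0 then show ?thesis by simp
next
  case (Suc k')
  show ?thesis
  proof (cases "k' < m")
    case True
    then have e: "m - k' = Suc (m - k)" "Suc m - k = Suc (m - k)" using Suc by auto
    have "G * ((m choose k') * G ^ k' * B ^ Suc (m - k)) + B * ((m choose k) * G ^ k * B ^ (m - k))
      = ((m choose k') + (m choose k)) * (G * G ^ k') * B ^ Suc (m - k)"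
      unfolding Suc by (simp add: algebra_simps)
    then show ?thesis using Suc e by simp
  next
    case False
    then have "m choose k = 0" using Suc by simp
    moreover have "Suc m - k = m - k'" using Suc False by simp
    ultimately show ?thesis using Suc False
      by (cases "k' = m") (auto simp: binomial_eq_0)
  qed
qed

lemma binom_count:
  fixes P :: "bool list list \<Rightarrow> bool" and n E :: nat
  defines "G \<equiv> card {b \<in> coin_seqs n E. P b}" and "B \<equiv> card {b \<in> coin_seqs n E. \<not> P b}"
  shows "card {cs \<in> coin_seqs n (m * E). cntP P E m cs = k} = (m choose k) * G ^ k * B ^ (m - k)"
proof (induction m arbitrary: k)
  case 0
  have "coin_seqs n 0 = {[]}" by (auto simp: coin_seqs_def)
  then show ?case by (cases k) (auto simp: cntP_def)
next
  case (Suc m)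
  let ?N = "\<lambda>k. card {cs \<in> coin_seqs n (m * E). cntP P E m cs = k}"
  have "{cs \<in> coin_seqs n (Suc m * E). cntP P E (Suc m) cs = k} =
        {cs \<in> coin_seqs n (E + m * E). (\<lambda>a c. (if P a then 1 else 0) + cntP P E m c = k) (take E cs) (drop E cs)}"
  proof (intro Collect_cong conj_cong)
    fix cs show "(cs \<in> coin_seqs n (Suc m * E)) = (cs \<in> coin_seqs n (E + m * E))" by simp
    assume "cs \<in> coin_seqs n (E + m * E)"
    then have "length (take E cs) = E" by (simp add: coin_seqs_def)
    from cntP_Suc[OF this, of P m "drop E cs"]
    show "(cntP P E (Suc m) cs = k) = ((if P (take E cs) then 1 else 0) + cntP P E m (drop E cs) = k)"
      by simp
  qed
  then have "card {cs \<in> coin_seqs n (Suc m * E). cntP P E (Suc m) cs = k} =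
     (\<Sum>a\<in>coin_seqs n E. card {c \<in> coin_seqs n (m * E). (if P a then 1 else 0) + cntP P E m c = k})"
    using card_coin_seqs_split[of n E "m * E" "\<lambda>a c. (if P a then 1 else 0) + cntP P E m c = k"] by simp
  also have "\<dots> = (\<Sum>a\<in>coin_seqs n E. if P a then (if k = 0 then 0 else ?N (k - 1)) else ?N k)"
  proof (intro sum.cong refl)
    fix a show "card {c \<in> coin_seqs n (m * E). (if P a then 1 else 0) + cntP P E m c = k} =
      (if P a then (if k = 0 then 0 else ?N (k - 1)) else ?N k)"
    proof (cases "P a")
      case True
      then show ?thesis by (cases k) auto
    qed simp
  qed
  also have "\<dots> = G * (if k = 0 then 0 else ?N (k - 1)) + B * ?N k"
  proof -
    have i1: "coin_seqs n E \<inter> {x. P x} = {b\<in>coin_seqs n E. P b}" by blast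
    have i2: "coin_seqs n E \<inter> - {x. P x} = {b\<in>coin_seqs n E. \<not> P b}" by blast
    show ?thesis
      by (simp only: sum.If_cases[OF finite_coin_seqs] i1 i2 sum_constant of_nat_id G_def B_def mult.commute)
  qed
  also have "\<dots> = (Suc m choose k) * G ^ k * B ^ (Suc m - k)"
    by (simp only: Suc.IH pascal_step)
  finally show ?case .
qed

lemma term_bound:
  fixes q :: real
  assumes "0 \<le> q" "q \<le> 1 - q" "h + 1 \<le> k" "k \<le> 2 * h + 1"
  shows "q ^ k * (1 - q) ^ (2 * h + 1 - k) \<le> (q * (1 - q)) ^ h"
proof -
  obtain a where a: "k = h + 1 + a" using assms(3) le_Suc_ex by blast
  have ah: "a \<le> h" using a assms(4) by simp
  have e: "2 * h + 1 - k = h - a" using a ah by simp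
  have q1: "q \<le> 1" using assms by simp
  have "q ^ k * (1 - q) ^ (2 * h + 1 - k) = q * (q ^ h * (q ^ a * (1 - q) ^ (h - a)))"
    unfolding e a by (simp add: power_add)
  also have "\<dots> \<le> 1 * (q ^ h * ((1 - q) ^ a * (1 - q) ^ (h - a)))"
    using assms q1 by (intro mult_mono power_mono) auto
  also have "\<dots> = (q * (1 - q)) ^ h"
    using ah by (simp add: power_add[symmetric] power_mult_distrib)
  finally show ?thesis .
qed

lemma qp_mono:
  fixes q p :: real
  assumes "0 \<le> q" "q \<le> p" "p \<le> 1/2"
  shows "q * (1 - q) \<le> p * (1 - p)"
proof -
  have "0 \<le> (p - q) * (1 - p - q)" using assms by (intro mult_nonneg_nonneg) auto
  then show ?thesis by (simp add: algebra_simps)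
qed

lemma tail_real:
  fixes q p :: real
  assumes "0 \<le> q" "q \<le> p" "p \<le> 1/2"
  shows "(\<Sum>k\<in>{h+1..2*h+1}. real ((2*h+1) choose k) * (q ^ k * (1 - q) ^ (2*h+1-k))) \<le> 2 ^ (2*h+1) * (p * (1 - p)) ^ h"
proof -
  have "(\<Sum>k\<in>{h+1..2*h+1}. real ((2*h+1) choose k) * (q ^ k * (1 - q) ^ (2*h+1-k)))
      \<le> (\<Sum>k\<in>{h+1..2*h+1}. real ((2*h+1) choose k) * (p * (1 - p)) ^ h)"
  proof (intro sum_mono mult_left_mono)
    fix k assume k: "k \<in> {h+1..2*h+1}"
    have "q ^ k * (1 - q) ^ (2 * h + 1 - k) \<le> (q * (1 - q)) ^ h"
      using assms k by (intro term_bound) auto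
    also have "\<dots> \<le> (p * (1 - p)) ^ h"
      using assms qp_mono[OF assms] by (intro power_mono) auto
    finally show "q ^ k * (1 - q) ^ (2 * h + 1 - k) \<le> (p * (1 - p)) ^ h" .
  qed simp
  also have "\<dots> = real (\<Sum>k\<in>{h+1..2*h+1}. (2*h+1) choose k) * (p * (1 - p)) ^ h"
    by (simp only: of_nat_sum sum_distrib_right)
  also have "\<dots> \<le> real (\<Sum>k\<le>2*h+1. (2*h+1) choose k) * (p * (1 - p)) ^ h"
  proof (intro mult_right_mono)
    show "real (\<Sum>k\<in>{h+1..2*h+1}. (2*h+1) choose k) \<le> real (\<Sum>k\<le>2*h+1. (2*h+1) choose k)"
      by (subst of_nat_le_iff, rule sum_mono2) auto
    show "0 \<le> (p * (1 - p)) ^ h" using assms by simp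
  qed
  also have "\<dots> = 2 ^ (2*h+1) * (p * (1 - p)) ^ h"
    unfolding choose_row_sum by simp
  finally show ?thesis .
qed

lemma card_split_pred: "finite S \<Longrightarrow> card {x\<in>S. P x} + card {x\<in>S. \<not> P x} = card S"
proof -
  assume f: "finite S"
  have "card ({x\<in>S. P x} \<union> {x\<in>S. \<not> P x}) = card {x\<in>S. P x} + card {x\<in>S. \<not> P x}"
    using f by (intro card_Un_disjoint) auto
  moreover have "{x\<in>S. P x} \<union> {x\<in>S. \<not> P x} = S" by blast
  ultimately show ?thesis by simp
qed

lemma tail_count:
  fixes P :: "bool list list \<Rightarrow> bool" and n E h :: nat and p :: real
  assumes "real (card {b \<in> coin_seqs n E. P b}) \<le> p * 2 ^ (n * E)" "0 \<le> p" "p \<le> 1/2"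
  shows "real (card {cs \<in> coin_seqs n ((2*h+1) * E). h + 1 \<le> cntP P E (2*h+1) cs})
          \<le> 2 ^ (2*h+1) * (p * (1 - p)) ^ h * 2 ^ (n * ((2*h+1) * E))"
proof -
  let ?m = "2*h+1"
  let ?S = "coin_seqs n (?m * E)"
  define G where "G = card {b \<in> coin_seqs n E. P b}"
  define B where "B = card {b \<in> coin_seqs n E. \<not> P b}"
  define Z :: real where "Z = 2 ^ (n * E)"
  define q where "q = real G / Z"
  have Zp: "Z > 0" unfolding Z_def by simp
  have GB: "G + B = 2 ^ (n * E)" unfolding G_def B_def
    using card_split_pred[OF finite_coin_seqs, of n E P] card_coin_seqs by simp
  have Gq: "real G = q * Z" unfolding q_def using Zp by simp
  have Bq: "real B = (1 - q) * Z" using GB Gq unfolding Z_def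
    by (simp add: algebra_simps) (metis add_diff_cancel_left' of_nat_add of_nat_numeral of_nat_power)
  have q0: "0 \<le> q" unfolding q_def using Zp by simp
  have qp: "q \<le> p" unfolding q_def using assms(1) Zp unfolding G_def Z_def
    by (simp add: divide_le_eq)
  have set_eq: "{cs \<in> ?S. h + 1 \<le> cntP P E ?m cs} = (\<Union>k\<in>{h+1..?m}. {cs \<in> ?S. cntP P E ?m cs = k})"
    using cntP_le[of P E ?m] by fastforce
  have "card {cs \<in> ?S. h + 1 \<le> cntP P E ?m cs} = (\<Sum>k\<in>{h+1..?m}. card {cs \<in> ?S. cntP P E ?m cs = k})"
    unfolding set_eq by (rule card_UN_disjoint) (auto simp: finite_coin_seqs)
  also have "\<dots> = (\<Sum>k\<in>{h+1..?m}. (?m choose k) * G ^ k * B ^ (?m - k))"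
    unfolding G_def B_def by (intro sum.cong refl binom_count)
  finally have "real (card {cs \<in> ?S. h + 1 \<le> cntP P E ?m cs}) =
      (\<Sum>k\<in>{h+1..?m}. real (?m choose k) * real G ^ k * real B ^ (?m - k))" by simp
  also have "\<dots> = (\<Sum>k\<in>{h+1..?m}. real (?m choose k) * (q ^ k * (1 - q) ^ (?m - k))) * Z ^ ?m"
    unfolding sum_distrib_right
  proof (intro sum.cong refl)
    fix k assume k: "k \<in> {h+1..?m}"
    have "Z ^ ?m = Z ^ k * Z ^ (?m - k)" using k by (simp add: power_add[symmetric])
    moreover have "real G ^ k * real B ^ (?m - k) = q ^ k * (1 - q) ^ (?m - k) * (Z ^ k * Z ^ (?m - k))"
      unfolding Gq Bq power_mult_distrib by (simp add: mult_ac)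
    ultimately show "real (?m choose k) * real G ^ k * real B ^ (?m - k) = real (?m choose k) * (q ^ k * (1 - q) ^ (?m - k)) * Z ^ ?m"
      by (simp add: mult_ac)
  qed
  also have "\<dots> \<le> 2 ^ ?m * (p * (1 - p)) ^ h * Z ^ ?m"
    using tail_real[OF q0 qp assms(3), of h] Zp by (intro mult_right_mono) auto
  also have "Z ^ ?m = 2 ^ (n * (?m * E))" unfolding Z_def power_mult[symmetric] by (simp add: algebra_simps)
  finally show ?thesis .
qed

lemma length_step[simp]: "length (step C c b) = length c"
  by (simp add: step_def)

lemma length_conf[simp]: "length (conf C c cs) = length c"
  by (induction cs arbitrary: c) auto

lemma conf_snoc: "conf C c (cs @ [b]) = step C (conf C c cs) b"
  by (induction cs arbitrary: c) auto

lemma step_nth: "i < length c \<Longrightarrow> step C c b ! i = (if b ! i then delta1 C else delta0 C)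
        (if i = 0 then None else Some (c ! (i - 1))) (c ! i)
        (if i + 1 < length c then Some (c ! (i + 1)) else None)"
  by (simp add: step_def)

lemma step_in_Q:
  assumes "is_paca C" "set c \<subseteq> Q C" shows "set (step C c b) \<subseteq> Q C"
proof -
  have "step C c b ! i \<in> Q C" if i: "i < length c" for i
  proof -
    have ci: "c ! i \<in> Q C" using assms(2) i by auto
    have l: "(if i = 0 then None else Some (c ! (i - 1))) \<in> insert None (Some ` Q C)"
      using assms(2) i by (auto intro!: imageI nth_mem simp: subset_iff)
    have r: "(if i + 1 < length c then Some (c ! (i + 1)) else None) \<in> insert None (Some ` Q C)"
      using assms(2) i by (auto intro!: imageI nth_mem simp: subset_iff)
    show ?thesis unfolding step_nth[OF i]
      using assms(1) ci l r unfolding is_paca_def by (auto simp del: insert_iff)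
  qed
  then show ?thesis by (auto simp: in_set_conv_nth)
qed

lemma conf_in_Q: "is_paca C \<Longrightarrow> set c \<subseteq> Q C \<Longrightarrow> set (conf C c cs) \<subseteq> Q C"
  by (induction cs arbitrary: c) (auto simp: step_in_Q)

lemma all_acc_nth: "all_acc C c \<longleftrightarrow> (\<forall>i<length c. c ! i \<in> Acc C)"
  unfolding all_acc_def by (metis in_set_conv_nth subset_code(1))

type_synonym tup = "nat \<times> nat \<times> nat \<times> bool list"

locale amp =
  fixes C :: paca and E m thr :: nat
  assumes paca: "is_paca C" and Epos: "0 < E" and mpos: "0 < m"
begin

definition opts :: "nat list list" where "opts = List.n_lists m [0..<Suc E]"
definition Tf :: nat where "Tf = m * E + length opts"
definition M :: nat where "M = Max (insert 0 (Q C))"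

definition enc :: "tup \<Rightarrow> nat" where
  "enc t = (case t of (a, c, s, R) \<Rightarrow> Suc M + list_encode (a # c # s # map (\<lambda>b. if b then 1 else 0) R))"

definition dec :: "nat \<Rightarrow> tup" where
  "dec v = (if v \<le> M then (v, 0, v, []) else
     (let l = list_decode (v - Suc M) in (l ! 0, l ! 1, l ! 2, map (\<lambda>z. z \<noteq> 0) (drop 3 l))))"

definition sf :: "tup \<Rightarrow> nat" where "sf t = fst (snd (snd t))"

definition F :: "bool \<Rightarrow> tup option \<Rightarrow> tup \<Rightarrow> tup option \<Rightarrow> tup" where
  "F bb L t Rn = (case t of (a, c, s, R) \<Rightarrow>
     if c < m * E then (a, Suc c, if Suc c mod E = 0 then a
          else (if bb then delta1 C else delta0 C) (map_option sf L) s (map_option sf Rn), R @ [s \<in> Acc C])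
     else (a, min (Suc c) Tf, s, R))"

definition dl :: "bool \<Rightarrow> nat option \<Rightarrow> nat \<Rightarrow> nat option \<Rightarrow> nat" where
  "dl bb l c r = enc (F bb (map_option dec l) (dec c) (map_option dec r))"

definition condT :: "tup \<Rightarrow> bool" where
  "condT t = (case t of (a, c, s, R) \<Rightarrow> m * E \<le> c \<and> c - m * E < length opts \<and>
      thr \<le> card {j. j < m \<and> opts ! (c - m * E) ! j < E} \<and>
      (\<forall>j<m. opts ! (c - m * E) ! j < E \<longrightarrow> R ! (j * E + opts ! (c - m * E) ! j)))"

definition Tset :: "tup set" where
  "Tset = {(a, c, s, R). a \<in> Sigma C \<and> c \<le> Tf \<and> s \<in> Q C \<and> length R \<le> c}"

definition Q' :: "nat set" where "Q' = Sigma C \<union> enc ` Tset"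
definition Acc' :: "nat set" where "Acc' = {v \<in> Q'. condT (dec v)}"

definition C' :: paca where
  "C' = \<lparr>Q = Q', Sigma = Sigma C, Acc = Acc', delta0 = dl False, delta1 = dl True\<rparr>"

lemma finQ: "finite (Q C)" using paca by (simp add: is_paca_def)
lemma SigQ: "Sigma C \<subseteq> Q C" using paca by (simp add: is_paca_def)

lemma le_M: "a \<in> Q C \<Longrightarrow> a \<le> M"
  unfolding M_def using finQ by (simp add: Max_ge)

lemma dec_enc[simp]: "dec (enc t) = t"
proof -
  obtain a c s R where t: "t = (a, c, s, R)" by (cases t) auto
  have h: "map (\<lambda>z::nat. z \<noteq> 0) (map (\<lambda>b. if b then 1 else 0) R) = R" by (induction R) auto
  have "dec (enc t) = (let l = a # c # s # map (\<lambda>b. if b then 1 else 0) R in (l ! 0, l ! 1, l ! 2, map (\<lambda>z. z \<noteq> 0) (drop 3 l)))"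
    unfolding t enc_def dec_def by (simp only: prod.case) simp
  also have "\<dots> = t" unfolding t Let_def using h by (simp del: map_map)
  finally show ?thesis .
qed

lemma enc_gt: "M < enc t"
  by (cases t) (simp add: enc_def)

lemma dec_Q: "a \<in> Q C \<Longrightarrow> dec a = (a, 0, a, [])"
  using le_M by (simp add: dec_def)

lemma finite_Tset: "finite Tset"
proof -
  have "Tset \<subseteq> Sigma C \<times> {..Tf} \<times> Q C \<times> {R. set R \<subseteq> (UNIV :: bool set) \<and> length R \<le> Tf}"
    unfolding Tset_def by auto
  moreover have "finite (Sigma C \<times> {..Tf} \<times> Q C \<times> {R. set R \<subseteq> (UNIV :: bool set) \<and> length R \<le> Tf})"
    using finQ finite_subset[OF SigQ finQ] finite_lists_length_le[of "UNIV :: bool set" Tf]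
    by (intro finite_cartesian_product) auto
  ultimately show ?thesis by (rule finite_subset)
qed

lemma dec_Tset: "v \<in> Q' \<Longrightarrow> dec v \<in> Tset"
  unfolding Q'_def using SigQ by (auto simp: dec_Q Tset_def)

lemma mE_le_Tf: "m * E \<le> Tf" by (simp add: Tf_def)

lemma F_Tset:
  assumes "t \<in> Tset" "L \<in> insert None (Some ` Tset)" "Rn \<in> insert None (Some ` Tset)"
  shows "F bb L t Rn \<in> Tset"
proof -
  obtain a c s R where t: "t = (a, c, s, R)" by (cases t) auto
  have a: "a \<in> Sigma C" "c \<le> Tf" "s \<in> Q C" "length R \<le> c" using assms(1) t by (auto simp: Tset_def)
  have sfL: "map_option sf L \<in> insert None (Some ` Q C)" using assms(2) by (auto simp: sf_def Tset_def)
  have sfR: "map_option sf Rn \<in> insert None (Some ` Q C)" using assms(3) by (auto simp: sf_def Tset_def)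
  have d: "(if bb then delta1 C else delta0 C) (map_option sf L) s (map_option sf Rn) \<in> Q C"
    using paca a(3) sfL sfR unfolding is_paca_def by (auto simp del: insert_iff)
  show ?thesis unfolding t F_def using a d SigQ mE_le_Tf by (auto simp: Tset_def)
qed

lemma is_paca_C': "is_paca C'"
  unfolding is_paca_def C'_def
proof (simp only: paca.simps, intro conjI allI impI)
  show "finite Q'" unfolding Q'_def using finite_Tset finite_subset[OF SigQ finQ] by simp
  show "Sigma C \<subseteq> Q'" unfolding Q'_def by auto
  show "Acc' \<subseteq> Q'" unfolding Acc'_def by auto
  fix l c r assume c: "c \<in> Q'" and l: "l \<in> insert None (Some ` Q')" and r: "r \<in> insert None (Some ` Q')"
  have Lm: "map_option dec l \<in> insert None (Some ` Tset)"
  proof (cases l)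
    case (Some v) then have "v \<in> Q'" using l by auto
    then show ?thesis using Some dec_Tset by simp
  qed simp
  have Rm: "map_option dec r \<in> insert None (Some ` Tset)"
  proof (cases r)
    case (Some v) then have "v \<in> Q'" using r by auto
    then show ?thesis using Some dec_Tset by simp
  qed simp
  have Fin: "F bb (map_option dec l) (dec c) (map_option dec r) \<in> Tset" for bb
    by (rule F_Tset[OF dec_Tset[OF c] Lm Rm])
  show "dl False l c r \<in> Q'" unfolding dl_def Q'_def using Fin[of False] by (intro UnI2 imageI)
  show "dl True l c r \<in> Q'" unfolding dl_def Q'_def using Fin[of True] by (intro UnI2 imageI)
qed

end

context amp begin

definition sblk :: "bool list list \<Rightarrow> nat \<Rightarrow> bool list list" where
  "sblk cs u = take (min u (m * E) mod E) (drop (min u (m * E) div E * E) cs)"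

definition tup :: "nat list \<Rightarrow> bool list list \<Rightarrow> tup list" where
  "tup x cs = map (\<lambda>i. (x ! i, min (length cs) Tf, conf C x (sblk cs (length cs)) ! i,
      map (\<lambda>u. conf C x (sblk cs u) ! i \<in> Acc C) [0..<min (length cs) (m * E)])) [0..<length x]"

definition stepT :: "tup list \<Rightarrow> bool list \<Rightarrow> tup list" where
  "stepT tl0 b = map (\<lambda>i. F (b ! i) (if i = 0 then None else Some (tl0 ! (i - 1))) (tl0 ! i)
      (if i + 1 < length tl0 then Some (tl0 ! (i + 1)) else None)) [0..<length tl0]"

lemma step_C'_dec: "map dec (step C' c b) = stepT (map dec c) b"
proof (rule nth_equalityI)
  show "length (map dec (step C' c b)) = length (stepT (map dec c) b)" by (simp add: stepT_def)
  fix i assume "i < length (map dec (step C' c b))"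
  then have i: "i < length c" by simp
  have d: "(if bb then delta1 C' else delta0 C') = dl bb" for bb by (cases bb) (simp_all add: C'_def)
  show "map dec (step C' c b) ! i = stepT (map dec c) b ! i"
    using i by (simp add: step_nth d dl_def stepT_def)
qed

lemma sblk_snoc:
  assumes "u \<le> length cs" shows "sblk (cs @ [b]) u = sblk cs u"
proof -
  define w where "w = min u (m * E)"
  have wle: "w \<le> length cs" using assms by (simp add: w_def)
  have le: "w mod E \<le> length cs - w div E * E"
    using wle div_mult_mod_eq[of w E] by linarith
  show ?thesis unfolding sblk_def w_def[symmetric] using le by simp
qed

lemma sblk_step:
  assumes "length cs = t" "Suc t \<le> m * E" "Suc t mod E \<noteq> 0"
  shows "sblk (cs @ [b]) (Suc t) = sblk cs t @ [b]"
proof -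
  have m1: "Suc t mod E = Suc (t mod E)" using assms(3) by (metis mod_Suc)
  have d1: "Suc t div E = t div E" using assms(3) by (simp add: div_Suc)
  have "t div E * E + t mod E = t" by (rule div_mult_mod_eq)
  then have l: "length (drop (t div E * E) cs) = t mod E" using assms(1) by (simp add: minus_div_mult_eq_mod)
  have "sblk cs t = drop (t div E * E) cs" unfolding sblk_def using assms l by simp
  moreover have "sblk (cs @ [b]) (Suc t) = drop (t div E * E) cs @ [b]"
    unfolding sblk_def using assms m1 d1 l div_times_less_eq_dividend[of t E] by simp
  ultimately show ?thesis by simp
qed

lemma sblk_zero: "min u (m * E) mod E = 0 \<Longrightarrow> sblk cs u = []"
  by (simp add: sblk_def)

lemma sblk_mE: "m * E \<le> u \<Longrightarrow> sblk cs u = []"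
  by (rule sblk_zero) simp

lemma sblk_blk:
  assumes "j < m" "r < E" shows "sblk cs (j * E + r) = take r (drop (j * E) cs)"
proof -
  have "j * E + r < Suc j * E" using assms by simp
  also have "Suc j * E \<le> m * E" using assms by (intro mult_le_mono1) simp
  finally have mn: "min (j * E + r) (m * E) = j * E + r" by simp
  have "(j * E + r) mod E = r" using assms by simp
  moreover have "(j * E + r) div E = j" using assms by simp
  ultimately show ?thesis unfolding sblk_def mn by simp
qed

lemma tup_nth: "i < length x \<Longrightarrow> tup x cs ! i = (x ! i, min (length cs) Tf, conf C x (sblk cs (length cs)) ! i,
      map (\<lambda>u. conf C x (sblk cs u) ! i \<in> Acc C) [0..<min (length cs) (m * E)])"
  by (simp add: tup_def)

lemma length_tup[simp]: "length (tup x cs) = length x" by (simp add: tup_def)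

lemma stepT_tup: "stepT (tup x cs) b = tup x (cs @ [b])"
proof (rule nth_equalityI)
  show "length (stepT (tup x cs) b) = length (tup x (cs @ [b]))" by (simp add: stepT_def)
  fix i assume "i < length (stepT (tup x cs) b)"
  then have i: "i < length x" by (simp add: stepT_def)
  define t where "t = length cs"
  define cf where "cf = conf C x (sblk cs t)"
  define RL where "RL = map (\<lambda>u. conf C x (sblk cs u) ! i \<in> Acc C)"
  have lcf: "length cf = length x" by (simp add: cf_def)
  have Rmap: "map (\<lambda>u. conf C x (sblk (cs @ [b]) u) ! i \<in> Acc C) [0..<k] = RL [0..<k]" if "k \<le> Suc t" for k
    unfolding RL_def using that by (intro map_cong refl) (simp add: sblk_snoc t_def)
  have ti: "tup x cs ! i = (x ! i, min t Tf, cf ! i, RL [0..<min t (m * E)])"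
    using tup_nth[OF i] by (simp add: t_def cf_def RL_def)
  have t1: "tup x (cs @ [b]) ! i = (x ! i, min (Suc t) Tf, conf C x (sblk (cs @ [b]) (Suc t)) ! i,
      map (\<lambda>u. conf C x (sblk (cs @ [b]) u) ! i \<in> Acc C) [0..<min (Suc t) (m * E)])"
    using tup_nth[OF i, of "cs @ [b]"] by (simp add: t_def)
  have L: "map_option sf (if i = 0 then None else Some (tup x cs ! (i - 1))) = (if i = 0 then None else Some (cf ! (i - 1)))"
    using i tup_nth[of "i - 1" x cs] by (simp add: sf_def t_def cf_def)
  have R: "map_option sf (if i + 1 < length (tup x cs) then Some (tup x cs ! (i + 1)) else None) =
      (if i + 1 < length cf then Some (cf ! (i + 1)) else None)"
    using i tup_nth[of "i + 1" x cs] lcf by (simp add: sf_def t_def cf_def)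
  have st: "stepT (tup x cs) b ! i = F (b ! i) (if i = 0 then None else Some (tup x cs ! (i - 1))) (tup x cs ! i)
      (if i + 1 < length (tup x cs) then Some (tup x cs ! (i + 1)) else None)"
    using i by (simp add: stepT_def)
  show "stepT (tup x cs) b ! i = tup x (cs @ [b]) ! i"
  proof (cases "t < m * E")
    case True
    have mt: "min t Tf = t" "min (Suc t) Tf = Suc t" "min t (m * E) = t" "min (Suc t) (m * E) = Suc t"
      using True mE_le_Tf by auto
    have Fv: "stepT (tup x cs) b ! i = (x ! i, Suc t, if Suc t mod E = 0 then x ! i
          else (if b ! i then delta1 C else delta0 C) (if i = 0 then None else Some (cf ! (i - 1))) (cf ! i)
            (if i + 1 < length cf then Some (cf ! (i + 1)) else None), RL [0..<t] @ [cf ! i \<in> Acc C])"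
      unfolding st ti F_def using True mt L R by simp
    have Rs: "map (\<lambda>u. conf C x (sblk (cs @ [b]) u) ! i \<in> Acc C) [0..<Suc t] = RL [0..<t] @ [cf ! i \<in> Acc C]"
      using Rmap[of "Suc t"] by (simp add: RL_def cf_def)
    have Ss: "conf C x (sblk (cs @ [b]) (Suc t)) ! i = (if Suc t mod E = 0 then x ! i
          else (if b ! i then delta1 C else delta0 C) (if i = 0 then None else Some (cf ! (i - 1))) (cf ! i)
            (if i + 1 < length cf then Some (cf ! (i + 1)) else None))"
    proof (cases "Suc t mod E = 0")
      case True
      then have "sblk (cs @ [b]) (Suc t) = []" using mt by (intro sblk_zero) simp
      then show ?thesis using True by simp
    next
      case False
      have "sblk (cs @ [b]) (Suc t) = sblk cs t @ [b]"
        using False \<open>t < m * E\<close> by (intro sblk_step) (auto simp: t_def)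
      then have "conf C x (sblk (cs @ [b]) (Suc t)) = step C cf b" by (simp add: conf_snoc cf_def)
      then show ?thesis using False i lcf by (simp add: step_nth)
    qed
    show ?thesis unfolding Fv t1 mt Rs Ss by simp
  next
    case False
    have mt: "min t (m * E) = m * E" "min (Suc t) (m * E) = m * E" "min (Suc (min t Tf)) Tf = min (Suc t) Tf"
      using False by auto
    have Fv: "stepT (tup x cs) b ! i = (x ! i, min (Suc t) Tf, cf ! i, RL [0..<m * E])"
      unfolding st ti F_def using False mt mE_le_Tf by (simp add: min_def)
    have "sblk (cs @ [b]) (Suc t) = []" "sblk cs t = []" using False by (auto intro: sblk_mE)
    then have "conf C x (sblk (cs @ [b]) (Suc t)) ! i = cf ! i" by (simp add: cf_def)
    then show ?thesis unfolding Fv t1 mt using Rmap[of "m * E"] False by simp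
  qed
qed

lemma sim:
  assumes "set x \<subseteq> Sigma C"
  shows "map dec (conf C' x cs) = tup x cs"
proof (induction cs rule: rev_induct)
  case Nil
  show ?case
  proof (rule nth_equalityI)
    show "length (map dec (conf C' x [])) = length (tup x [])" by simp
    fix i assume "i < length (map dec (conf C' x []))"
    then have i: "i < length x" by simp
    then have "x ! i \<in> Q C" using assms SigQ by (meson nth_mem subsetD)
    then show "map dec (conf C' x []) ! i = tup x [] ! i"
      using i by (simp add: tup_nth dec_Q sblk_def)
  qed
next
  case (snoc b cs)
  have "map dec (conf C' x (cs @ [b])) = stepT (map dec (conf C' x cs)) b"
    by (simp add: conf_snoc step_C'_dec)
  then show ?case using snoc by (simp add: stepT_tup)
qed

end

context amp begin

lemma Q_C'[simp]: "Q C' = Q'" and Acc_C'[simp]: "Acc C' = Acc'" and Sigma_C'[simp]: "Sigma C' = Sigma C"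
  by (simp_all add: C'_def)

lemma conf_C'_Q: "set x \<subseteq> Sigma C \<Longrightarrow> set (conf C' x cs) \<subseteq> Q'"
  using conf_in_Q[OF is_paca_C', of x cs] by (auto simp: Q'_def)

lemma acc_tup:
  assumes "set x \<subseteq> Sigma C"
  shows "all_acc C' (conf C' x cs) \<longleftrightarrow> (\<forall>i<length x. condT (tup x cs ! i))"
proof -
  have "conf C' x cs ! i \<in> Acc' \<longleftrightarrow> condT (tup x cs ! i)" if i: "i < length x" for i
  proof -
    have "conf C' x cs ! i \<in> Q'" using conf_C'_Q[OF assms, of cs] i by (simp add: subset_iff)
    moreover have "dec (conf C' x cs ! i) = tup x cs ! i"
      using sim[OF assms, of cs] i by (metis length_conf nth_map)
    ultimately show ?thesis unfolding Acc'_def by simp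
  qed
  then show ?thesis unfolding all_acc_nth by simp
qed

lemma opts_nth: "k < length opts \<Longrightarrow> length (opts ! k) = m \<and> (\<forall>j<m. opts ! k ! j \<le> E)"
proof -
  assume "k < length opts"
  then have "opts ! k \<in> set opts" by simp
  then have o: "length (opts ! k) = m" "set (opts ! k) \<subseteq> {0..<Suc E}"
    unfolding opts_def set_n_lists by auto
  have "opts ! k ! j \<le> E" if "j < m" for j
    using o nth_mem[of j "opts ! k"] that by fastforce
  then show ?thesis using o by simp
qed

lemma condT_tup:
  fixes x :: "nat list" and cs :: "bool list list"
  assumes i: "i < length x"
  defines "oo \<equiv> opts ! (length cs - m * E)"
  shows "condT (tup x cs ! i) \<longleftrightarrow> (m * E \<le> length cs \<and> length cs < Tf \<and> thr \<le> card {j. j < m \<and> oo ! j < E} \<and>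
     (\<forall>j<m. oo ! j < E \<longrightarrow> conf C x (take (oo ! j) (drop (j * E) cs)) ! i \<in> Acc C))"
proof (cases "m * E \<le> length cs \<and> length cs < Tf")
  case True
  then have mt: "min (length cs) Tf = length cs" "min (length cs) (m * E) = m * E" by auto
  have lo: "length cs - m * E < length opts" using True unfolding Tf_def by arith
  have R: "map (\<lambda>u. conf C x (sblk cs u) ! i \<in> Acc C) [0..<m * E] ! (j * E + oo ! j) =
       (conf C x (take (oo ! j) (drop (j * E) cs)) ! i \<in> Acc C)" if j: "j < m" "oo ! j < E" for j
  proof -
    have "j * E + oo ! j < Suc j * E" using j by simp
    also have "Suc j * E \<le> m * E" using j by (intro mult_le_mono1) simp
    finally have "j * E + oo ! j < m * E" .
    then show ?thesis using sblk_blk[OF j] by simp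
  qed
  show ?thesis unfolding tup_nth[OF i] condT_def mt using True lo R by (auto simp: oo_def)
next
  case False
  then have "\<not> (m * E \<le> min (length cs) Tf \<and> min (length cs) Tf - m * E < length opts)"
    by (auto simp: Tf_def min_def)
  then show ?thesis unfolding tup_nth[OF i] condT_def using False by auto
qed

lemma acc_iff:
  fixes x :: "nat list" and cs :: "bool list list"
  assumes "set x \<subseteq> Sigma C" "0 < length x"
  defines "oo \<equiv> opts ! (length cs - m * E)"
  shows "all_acc C' (conf C' x cs) \<longleftrightarrow> (m * E \<le> length cs \<and> length cs < Tf \<and> thr \<le> card {j. j < m \<and> oo ! j < E} \<and>
     (\<forall>j<m. oo ! j < E \<longrightarrow> all_acc C (conf C x (take (oo ! j) (drop (j * E) cs)))))"
proof -
  let ?A = "m * E \<le> length cs \<and> length cs < Tf \<and> thr \<le> card {j. j < m \<and> oo ! j < E}"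
  let ?B = "\<lambda>i j. conf C x (take (oo ! j) (drop (j * E) cs)) ! i \<in> Acc C"
  have "all_acc C' (conf C' x cs) \<longleftrightarrow> (\<forall>i<length x. ?A \<and> (\<forall>j<m. oo ! j < E \<longrightarrow> ?B i j))"
    unfolding acc_tup[OF assms(1)] oo_def using condT_tup[where cs = cs and x = x] by simp
  also have "\<dots> \<longleftrightarrow> ?A \<and> (\<forall>j<m. oo ! j < E \<longrightarrow> (\<forall>i<length x. ?B i j))"
    using assms(2) by auto
  also have "\<dots> \<longleftrightarrow> ?A \<and> (\<forall>j<m. oo ! j < E \<longrightarrow> all_acc C (conf C x (take (oo ! j) (drop (j * E) cs))))"
    by (simp only: all_acc_nth length_conf)
  finally show ?thesis by simp
qed

lemma selection:
  fixes x :: "nat list" and cs :: "bool list list"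
  defines "Pb \<equiv> \<lambda>blk. \<exists>r<E. all_acc C (conf C x (take r blk))"
  shows "(\<exists>k<length opts. thr \<le> card {j. j < m \<and> opts ! k ! j < E} \<and>
           (\<forall>j<m. opts ! k ! j < E \<longrightarrow> all_acc C (conf C x (take (opts ! k ! j) (drop (j * E) cs)))))
         \<longleftrightarrow> thr \<le> cntP Pb E m cs"
proof
  assume "\<exists>k<length opts. thr \<le> card {j. j < m \<and> opts ! k ! j < E} \<and>
           (\<forall>j<m. opts ! k ! j < E \<longrightarrow> all_acc C (conf C x (take (opts ! k ! j) (drop (j * E) cs))))"
  then obtain k where k: "thr \<le> card {j. j < m \<and> opts ! k ! j < E}"
     "\<And>j. j < m \<Longrightarrow> opts ! k ! j < E \<Longrightarrow> all_acc C (conf C x (take (opts ! k ! j) (drop (j * E) cs)))" by blast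
  have "{j. j < m \<and> opts ! k ! j < E} \<subseteq> {j. j < m \<and> Pb (blkj E cs j)}"
  proof safe
    fix j assume j: "j < m" "opts ! k ! j < E"
    have "take (opts ! k ! j) (blkj E cs j) = take (opts ! k ! j) (drop (j * E) cs)"
      using j by (simp add: blkj_def min_def)
    then show "Pb (blkj E cs j)" unfolding Pb_def using k(2)[OF j] j(2) by metis
  qed
  then have "card {j. j < m \<and> opts ! k ! j < E} \<le> cntP Pb E m cs"
    unfolding cntP_def by (intro card_mono) auto
  then show "thr \<le> cntP Pb E m cs" using k(1) by simp
next
  assume th: "thr \<le> cntP Pb E m cs"
  define sel where "sel j = (SOME r. r < E \<and> all_acc C (conf C x (take r (blkj E cs j))))" for j
  define oo where "oo = map (\<lambda>j. if Pb (blkj E cs j) then sel j else E) [0..<m]"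
  have sel: "sel j < E \<and> all_acc C (conf C x (take (sel j) (blkj E cs j)))" if "Pb (blkj E cs j)" for j
    using that unfolding Pb_def sel_def by (rule someI_ex)
  have "oo \<in> set opts" unfolding opts_def set_n_lists oo_def
    using sel by (auto simp: less_Suc_eq_le less_imp_le)
  then obtain k where k: "k < length opts" "opts ! k = oo" by (auto simp: in_set_conv_nth)
  have oj: "oo ! j < E \<longleftrightarrow> Pb (blkj E cs j)" if "j < m" for j
    using that sel[of j] by (auto simp: oo_def)
  have "{j. j < m \<and> oo ! j < E} = {j. j < m \<and> Pb (blkj E cs j)}" using oj by auto
  then have c: "thr \<le> card {j. j < m \<and> opts ! k ! j < E}" using th k(2) by (simp add: cntP_def)
  have "all_acc C (conf C x (take (oo ! j) (drop (j * E) cs)))" if j: "j < m" "oo ! j < E" for j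
  proof -
    have P: "Pb (blkj E cs j)" using oj j by simp
    then have "oo ! j = sel j" using j by (simp add: oo_def)
    moreover have "take (sel j) (blkj E cs j) = take (sel j) (drop (j * E) cs)"
      using sel[OF P] by (simp add: blkj_def min_def)
    ultimately show ?thesis using sel[OF P] by simp
  qed
  then show "\<exists>k<length opts. thr \<le> card {j. j < m \<and> opts ! k ! j < E} \<and>
           (\<forall>j<m. opts ! k ! j < E \<longrightarrow> all_acc C (conf C x (take (opts ! k ! j) (drop (j * E) cs))))"
    using k c by auto
qed

end

lemma T_bound:
  fixes T :: "nat \<Rightarrow> nat"
  assumes "(\<lambda>n. real (T n)) \<in> O(\<lambda>n. 1)"
  shows "\<exists>K. \<forall>n. T n \<le> K"
proof -
  obtain c where c: "c > 0" "eventually (\<lambda>n. norm (real (T n)) \<le> c * norm (1::real)) at_top"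
    using assms by (rule landau_o.bigE)
  then obtain N where N: "\<And>n. n \<ge> N \<Longrightarrow> real (T n) \<le> c" by (auto simp: eventually_at_top_linorder)
  define K where "K = max (nat \<lceil>c\<rceil>) (Max (T ` {..<N}))"
  have "T n \<le> K" for n
  proof (cases "n < N")
    case True then have "T n \<le> Max (T ` {..<N})" by (intro Max_ge) auto
    then show ?thesis unfolding K_def by simp
  next
    case False then have "real (T n) \<le> c" using N by simp
    then have "T n \<le> nat \<lceil>c\<rceil>" by linarith
    then show ?thesis unfolding K_def by simp
  qed
  then show ?thesis by blast
qed

lemma first_acc:
  assumes "has_time C T" "set x \<subseteq> Sigma C" "cs \<in> coin_seqs (length x) (length cs)" "all_acc C (conf C x cs)"
  shows "\<exists>k\<le>length cs. k < T (length x) \<and> all_acc C (conf C x (take k cs))"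
proof -
  define k0 where "k0 = (LEAST k. all_acc C (conf C x (take k cs)))"
  have ex: "all_acc C (conf C x (take (length cs) cs))" using assms(4) by simp
  have k0: "all_acc C (conf C x (take k0 cs))" unfolding k0_def using ex by (rule LeastI)
  have k0le: "k0 \<le> length cs" unfolding k0_def using ex by (rule Least_le)
  have nb: "\<not> all_acc C (conf C x (take k (take k0 cs)))" if "k < length (take k0 cs)" for k
  proof -
    have "k < k0" using that by simp
    then have "\<not> all_acc C (conf C x (take k cs))" unfolding k0_def by (rule not_less_Least)
    then show ?thesis using \<open>k < k0\<close> by (simp add: min_def)
  qed
  have cs0: "take k0 cs \<in> coin_seqs (length x) (length (take k0 cs))"
    using assms(3) by (auto simp: coin_seqs_def dest: in_set_takeD)
  have "length (take k0 cs) < T (length x)"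
    using assms(1) assms(2) cs0 k0 nb unfolding has_time_def by blast
  then show ?thesis using k0le k0 by (intro exI[of _ k0]) simp
qed

lemma prob_accept_nil: "prob_accept C [] = 1"
proof -
  have pw: "prob_within C [] t = 1" for t
  proof -
    have "coin_seqs 0 t = {replicate t []}" by (auto simp: coin_seqs_def intro: replicate_eqI)
    moreover have "ev C [] t (replicate t [])" unfolding ev_def
      by (intro exI[of _ 0]) (simp add: all_acc_def)
    ultimately have "{cs \<in> coin_seqs (length ([]::nat list)) t. ev C [] t cs} = {replicate t []}" by auto
    then show ?thesis unfolding prob_within_ev by simp
  qed
  show ?thesis using prob_accept_eq[of 0 C "[]"] pw by simp
qed

lemma T0: "has_time C T \<Longrightarrow> 0 < T 0"
  unfolding has_time_def
  by (erule allE[of _ "[]"], erule allE[of _ "[]"]) (simp add: coin_seqs_def all_acc_def)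

lemma tdt: "r + d \<le> a \<Longrightarrow> take r (drop d (take a cs)) = take r (drop d cs)"
  by (simp add: drop_take min_def)

lemma jE_le: "j < m \<Longrightarrow> r < E \<Longrightarrow> j * E + r \<le> m * (E::nat)"
proof -
  assume a: "j < m" "r < E"
  have "j * E + r < Suc j * E" using a by simp
  also have "Suc j * E \<le> m * E" using a by (intro mult_le_mono1) simp
  finally show ?thesis by simp
qed

lemma cnt_compl: "cntP P E m cs + cntP (\<lambda>b. \<not> P b) E m cs = m"
proof -
  have "card {j\<in>{..<m}. P (blkj E cs j)} + card {j\<in>{..<m}. \<not> P (blkj E cs j)} = card {..<m}"
    by (rule card_split_pred) simp
  moreover have "{j\<in>{..<m}. P (blkj E cs j)} = {j. j < m \<and> P (blkj E cs j)}"
     "{j\<in>{..<m}. \<not> P (blkj E cs j)} = {j. j < m \<and> \<not> P (blkj E cs j)}" by auto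
  ultimately show ?thesis unfolding cntP_def by simp
qed

context amp begin

lemma q_card:
  assumes ht: "has_time C T" and TD: "\<forall>n. T n \<le> D" and ED: "E = Suc D" and x: "set x \<subseteq> Sigma C"
  shows "real (card {b \<in> coin_seqs (length x) E. \<exists>r<E. all_acc C (conf C x (take r b))})
           = prob_accept C x * 2 ^ (length x * E)"
proof -
  let ?n = "length x"
  have st: "prob_within C x t = prob_within C x D" if "D \<le> t" for t
  proof (rule prob_within_stable[OF _ that])
    fix cs assume "cs \<in> coin_seqs (length x) (length cs)" "all_acc C (conf C x cs)"
    from first_acc[OF ht x this] obtain k where "k \<le> length cs" "k < T ?n" "all_acc C (conf C x (take k cs))" by blast
    then show "\<exists>k\<le>D. k \<le> length cs \<and> all_acc C (conf C x (take k cs))"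
      using TD by (metis le_trans less_imp_le)
  qed
  have pa: "prob_accept C x = prob_within C x D" by (rule prob_accept_eq) (rule st)
  have eq: "{b \<in> coin_seqs ?n (D + 1). \<exists>r<E. all_acc C (conf C x (take r b))} =
            {b \<in> coin_seqs ?n (D + 1). ev C x D (take D b)}"
  proof (intro Collect_cong conj_cong refl)
    fix b
    have "(\<exists>r<E. all_acc C (conf C x (take r b))) \<longleftrightarrow> (\<exists>r\<le>D. all_acc C (conf C x (take r b)))"
      using ED by (simp add: less_Suc_eq_le)
    also have "\<dots> \<longleftrightarrow> ev C x D (take D b)" unfolding ev_def
    proof
      assume "\<exists>r\<le>D. all_acc C (conf C x (take r b))"
      then obtain r where "r \<le> D" "all_acc C (conf C x (take r b))" by blast
      then show "\<exists>k\<le>D. all_acc C (conf C x (take k (take D b)))" by (intro exI[of _ r]) (simp add: min_def)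
    next
      assume "\<exists>k\<le>D. all_acc C (conf C x (take k (take D b)))"
      then obtain r where "r \<le> D" "all_acc C (conf C x (take r (take D b)))" by blast
      then show "\<exists>r\<le>D. all_acc C (conf C x (take r b))" by (intro exI[of _ r]) (simp add: min_def)
    qed
    finally show "(\<exists>r<E. all_acc C (conf C x (take r b))) = ev C x D (take D b)" .
  qed
  have "card {b \<in> coin_seqs ?n E. \<exists>r<E. all_acc C (conf C x (take r b))} = card {cs \<in> coin_seqs ?n D. ev C x D cs} * 2 ^ (?n * 1)"
    using eq card_coin_seqs_take[of ?n D 1 "ev C x D"] ED by simp
  then have "real (card {b \<in> coin_seqs ?n E. \<exists>r<E. all_acc C (conf C x (take r b))}) =
      real (card {cs \<in> coin_seqs ?n D. ev C x D cs}) * 2 ^ ?n" by simp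
  also have "\<dots> = prob_within C x D * 2 ^ (?n * D) * 2 ^ ?n"
    unfolding prob_within_ev by simp
  also have "\<dots> = prob_accept C x * 2 ^ (?n * E)"
    unfolding pa ED by (simp add: power_add)
  finally show ?thesis .
qed

lemma pacc':
  fixes x :: "nat list"
  assumes x: "set x \<subseteq> Sigma C" and n0: "0 < length x"
  defines "Pb \<equiv> \<lambda>blk. \<exists>r<E. all_acc C (conf C x (take r blk))"
  shows "prob_accept C' x = real (card {cs \<in> coin_seqs (length x) (m * E). thr \<le> cntP Pb E m cs}) / 2 ^ (length x * (m * E))"
proof -
  let ?n = "length x"
  have st: "prob_within C' x t = prob_within C' x Tf" if "Tf \<le> t" for t
  proof (rule prob_within_stable[OF _ that])
    fix cs assume "cs \<in> coin_seqs (length x) (length cs)" "all_acc C' (conf C' x cs)"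
    then have "length cs < Tf" using acc_iff[OF x n0] by blast
    then show "\<exists>k\<le>Tf. k \<le> length cs \<and> all_acc C' (conf C' x (take k cs))"
      using \<open>all_acc C' (conf C' x cs)\<close> by (intro exI[of _ "length cs"]) simp
  qed
  have pa: "prob_accept C' x = prob_within C' x Tf" by (rule prob_accept_eq) (rule st)
  have key: "ev C' x Tf cs \<longleftrightarrow> thr \<le> cntP Pb E m (take (m * E) cs)" if cs: "cs \<in> coin_seqs ?n Tf" for cs
  proof
    assume "ev C' x Tf cs"
    then obtain k where k: "k \<le> Tf" "all_acc C' (conf C' x (take k cs))" unfolding ev_def by blast
    have lk: "length (take k cs) = k" using k cs by (simp add: coin_seqs_def)
    define oo where "oo = opts ! (k - m * E)"
    from k(2) have A: "m * E \<le> k" "k < Tf" "thr \<le> card {j. j < m \<and> oo ! j < E}"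
       "\<And>j. j < m \<Longrightarrow> oo ! j < E \<Longrightarrow> all_acc C (conf C x (take (oo ! j) (drop (j * E) (take k cs))))"
      unfolding acc_iff[OF x n0] lk oo_def by blast+
    have "\<exists>k'<length opts. thr \<le> card {j. j < m \<and> opts ! k' ! j < E} \<and>
           (\<forall>j<m. opts ! k' ! j < E \<longrightarrow> all_acc C (conf C x (take (opts ! k' ! j) (drop (j * E) (take (m * E) cs)))))"
    proof (intro exI[of _ "k - m * E"] conjI allI impI)
      show "k - m * E < length opts" using A by (simp add: Tf_def)
      show "thr \<le> card {j. j < m \<and> opts ! (k - m * E) ! j < E}" using A(3) by (simp add: oo_def)
      fix j assume j: "j < m" "opts ! (k - m * E) ! j < E"
      have le: "oo ! j + j * E \<le> m * E" using jE_le[of j m "oo ! j" E] j by (simp add: oo_def)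
      have "take (oo ! j) (drop (j * E) (take k cs)) = take (oo ! j) (drop (j * E) (take (m * E) cs))"
        using tdt[of "oo ! j" "j * E" k cs] tdt[of "oo ! j" "j * E" "m * E" cs] le A(1) by simp
      then show "all_acc C (conf C x (take (opts ! (k - m * E) ! j) (drop (j * E) (take (m * E) cs))))"
        using A(4)[of j] j by (simp add: oo_def)
    qed
    then show "thr \<le> cntP Pb E m (take (m * E) cs)" unfolding Pb_def selection .
  next
    assume "thr \<le> cntP Pb E m (take (m * E) cs)"
    then obtain k' where k': "k' < length opts" "thr \<le> card {j. j < m \<and> opts ! k' ! j < E}"
      "\<And>j. j < m \<Longrightarrow> opts ! k' ! j < E \<Longrightarrow> all_acc C (conf C x (take (opts ! k' ! j) (drop (j * E) (take (m * E) cs))))"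
      unfolding Pb_def selection[symmetric] by blast
    define k where "k = m * E + k'"
    have kT: "k < Tf" using k' by (simp add: k_def Tf_def)
    have lk: "length (take k cs) = k" using kT cs by (simp add: coin_seqs_def)
    have kk: "k - m * E = k'" by (simp add: k_def)
    have "all_acc C' (conf C' x (take k cs))"
      unfolding acc_iff[OF x n0] lk kk
    proof (intro conjI allI impI)
      show "m * E \<le> k" "k < Tf" "thr \<le> card {j. j < m \<and> opts ! k' ! j < E}" using kT k' by (auto simp: k_def)
      fix j assume j: "j < m" "opts ! k' ! j < E"
      have le: "opts ! k' ! j + j * E \<le> m * E" using jE_le[of j m "opts ! k' ! j" E] j by simp
      have "take (opts ! k' ! j) (drop (j * E) (take k cs)) = take (opts ! k' ! j) (drop (j * E) (take (m * E) cs))"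
        using tdt[of "opts ! k' ! j" "j * E" k cs] tdt[of "opts ! k' ! j" "j * E" "m * E" cs] le
        by (simp add: k_def)
      then show "all_acc C (conf C x (take (opts ! k' ! j) (drop (j * E) (take k cs))))"
        using k'(3)[OF j] by simp
    qed
    then show "ev C' x Tf cs" unfolding ev_def using kT by (intro exI[of _ k]) simp
  qed
  obtain d where Tfd: "Tf = m * E + d" using mE_le_Tf le_Suc_ex by blast
  have "{cs \<in> coin_seqs ?n Tf. ev C' x Tf cs} = {cs \<in> coin_seqs ?n (m * E + d). thr \<le> cntP Pb E m (take (m * E) cs)}"
    using key Tfd by auto
  then have c: "card {cs \<in> coin_seqs ?n Tf. ev C' x Tf cs} = card {cs \<in> coin_seqs ?n (m * E). thr \<le> cntP Pb E m cs} * 2 ^ (?n * d)"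
    using card_coin_seqs_take[of ?n "m * E" d "\<lambda>cs. thr \<le> cntP Pb E m cs"] by simp
  have X: "(2::real) ^ (?n * Tf) = 2 ^ (?n * (m * E)) * 2 ^ (?n * d)"
    unfolding Tfd by (simp add: power_add add_mult_distrib2)
  show ?thesis unfolding pa prob_within_ev c X by simp
qed

end

theorem mainTheorem7:
  fixes p p' :: real and C :: paca and L :: "nat list set" and T :: "nat \<Rightarrow> nat"
  assumes "0 < p'" and "p' < p" and "p < 1/2"
    and "is_paca C" and "two_sided C p L"
    and "has_time C T" and "(\<lambda>n. real (T n)) \<in> O(\<lambda>n. 1)"
  shows "\<exists>C' T'. is_paca C' \<and> Sigma C' = Sigma C \<and> two_sided C' p' L \<and>
           has_time C' T' \<and> (\<lambda>n. real (T' n)) \<in> O(\<lambda>n. real (T n))"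
proof -
  have Lsub: "L \<subseteq> lists (Sigma C)" using assms(5) unfolding two_sided_def by (rule conjunct1)
  have tsx: "(x \<in> L \<longleftrightarrow> prob_accept C x \<ge> 1 - p) \<and> (x \<notin> L \<longleftrightarrow> prob_accept C x \<le> p)"
    if "x \<in> lists (Sigma C)" for x
  proof -
    have "\<forall>x \<in> lists (Sigma C). (x \<in> L \<longleftrightarrow> prob_accept C x \<ge> 1 - p) \<and> (x \<notin> L \<longleftrightarrow> prob_accept C x \<le> p)"
      using assms(5) unfolding two_sided_def by (rule conjunct2)
    then show ?thesis using that by (rule bspec)
  qed
  obtain D where TD: "\<forall>n. T n \<le> D" using T_bound[OF assms(7)] by blast
  define E where "E = Suc D"
  define y where "y = 4 * p * (1 - p)"
  have y0: "0 < y" using assms unfolding y_def by (intro mult_pos_pos) auto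
  have "0 < (1 - 2 * p) ^ 2" using assms by simp
  then have y1: "y < 1" by (simp add: y_def power2_eq_square algebra_simps)
  obtain h where h: "y ^ h < p' / 2" using real_arch_pow_inv[of "p' / 2" y] assms(1) y1 by auto
  define m where "m = 2 * h + 1"
  interpret A: amp C E m "h + 1" using assms(4) by unfold_locales (auto simp: E_def m_def)
  define T' where "T' n = (if T n = 0 then 0 else A.Tf)" for n
  have Tf0: "0 < A.Tf" using A.mE_le_Tf by (simp add: m_def E_def)
  have bound: "2 ^ m * (p * (1 - p)) ^ h \<le> p'"
  proof -
    have e4: "(2::real) ^ (2 * h) = 4 ^ h" by (induction h) auto
    have "(2::real) ^ m = 2 * 4 ^ h" unfolding m_def using e4 by simp
    moreover have "(4::real) ^ h * (p * (1 - p)) ^ h = y ^ h"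
      unfolding y_def power_mult_distrib[symmetric] by (simp add: mult.assoc)
    ultimately have "(2::real) ^ m * (p * (1 - p)) ^ h = 2 * y ^ h" by simp
    then show ?thesis using h by simp
  qed
  have p0: "0 \<le> p" and p12: "p \<le> 1/2" using assms by auto
  have p'lt: "p' < 1 - p'" using assms by simp
  have main_x: "(x \<in> L \<longrightarrow> 1 - p' \<le> prob_accept A.C' x) \<and> (x \<notin> L \<longrightarrow> prob_accept A.C' x \<le> p')"
    if x: "x \<in> lists (Sigma C)" "0 < length x" for x
  proof -
    have xs: "set x \<subseteq> Sigma C" using x by auto
    let ?n = "length x"
    define Pb where "Pb = (\<lambda>blk. \<exists>r<E. all_acc C (conf C x (take r blk)))"
    define q where "q = prob_accept C x"
    define Z :: real where "Z = 2 ^ (?n * E)"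
    define W :: real where "W = 2 ^ (?n * (m * E))"
    have Zp: "Z > 0" unfolding Z_def by simp
    have Wp: "W > 0" unfolding W_def by simp
    have cP: "real (card {b \<in> coin_seqs ?n E. Pb b}) = q * Z"
      using A.q_card[OF assms(6) TD E_def xs] by (simp add: Pb_def q_def Z_def)
    have cc: "card {b \<in> coin_seqs ?n E. Pb b} + card {b \<in> coin_seqs ?n E. \<not> Pb b} = 2 ^ (?n * E)"
      using card_split_pred[OF finite_coin_seqs, of ?n E Pb] card_coin_seqs by simp
    have "real (card {b \<in> coin_seqs ?n E. Pb b}) + real (card {b \<in> coin_seqs ?n E. \<not> Pb b}) = Z"
      unfolding Z_def using arg_cong[OF cc, of real] by simp
    then have cN: "real (card {b \<in> coin_seqs ?n E. \<not> Pb b}) = (1 - q) * Z" using cP by (simp add: algebra_simps)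
    define Np where "Np = card {cs \<in> coin_seqs ?n (m * E). h + 1 \<le> cntP Pb E m cs}"
    define Nn where "Nn = card {cs \<in> coin_seqs ?n (m * E). h + 1 \<le> cntP (\<lambda>b. \<not> Pb b) E m cs}"
    have pa: "prob_accept A.C' x = real Np / W"
      using A.pacc'[OF xs x(2)] by (simp add: Pb_def W_def Np_def)
    have "{cs \<in> coin_seqs ?n (m * E). h + 1 \<le> cntP (\<lambda>b. \<not> Pb b) E m cs} =
          {cs \<in> coin_seqs ?n (m * E). \<not> h + 1 \<le> cntP Pb E m cs}"
    proof (intro Collect_cong conj_cong refl)
      fix cs
      have "cntP Pb E m cs + cntP (\<lambda>b. \<not> Pb b) E m cs = m" by (rule cnt_compl)
      then show "(h + 1 \<le> cntP (\<lambda>b. \<not> Pb b) E m cs) = (\<not> h + 1 \<le> cntP Pb E m cs)"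
        unfolding m_def by arith
    qed
    then have cc2: "Np + Nn = 2 ^ (?n * (m * E))"
      unfolding Np_def Nn_def using card_split_pred[OF finite_coin_seqs, of ?n "m * E" "\<lambda>cs. h + 1 \<le> cntP Pb E m cs"]
        card_coin_seqs by simp
    have NpNn: "real Np + real Nn = W" unfolding W_def using arg_cong[OF cc2, of real] by simp
    show ?thesis
    proof (intro conjI impI)
      assume "x \<in> L"
      then have "1 - p \<le> q" using tsx[OF x(1)] q_def by simp
      then have "real (card {b \<in> coin_seqs ?n E. \<not> Pb b}) \<le> p * 2 ^ (?n * E)"
        using cN Zp unfolding Z_def by (simp add: mult_right_mono)
      from tail_count[OF this p0 p12, of h]
      have "real Nn \<le> 2 ^ m * (p * (1 - p)) ^ h * W" unfolding Nn_def W_def m_def .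
      also have "\<dots> \<le> p' * W" using bound Wp by (intro mult_right_mono) auto
      finally have "(1 - p') * W \<le> real Np" using NpNn by (simp add: algebra_simps)
      then show "1 - p' \<le> prob_accept A.C' x" unfolding pa using Wp by (simp add: le_divide_eq)
    next
      assume "x \<notin> L"
      then have "q \<le> p" using tsx[OF x(1)] q_def by blast
      then have "real (card {b \<in> coin_seqs ?n E. Pb b}) \<le> p * 2 ^ (?n * E)"
        using cP Zp unfolding Z_def by (simp add: mult_right_mono)
      from tail_count[OF this p0 p12, of h]
      have "real Np \<le> 2 ^ m * (p * (1 - p)) ^ h * W" unfolding Np_def W_def m_def .
      also have "\<dots> \<le> p' * W" using bound Wp by (intro mult_right_mono) auto
      finally show "prob_accept A.C' x \<le> p'" unfolding pa using Wp by (simp add: divide_le_eq)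
    qed
  qed
  show ?thesis
  proof (intro exI[of _ A.C'] exI[of _ T'] conjI)
    show "is_paca A.C'" by (rule A.is_paca_C')
    show "Sigma A.C' = Sigma C" by (rule A.Sigma_C')
    show "two_sided A.C' p' L" unfolding two_sided_def A.Sigma_C'
    proof (rule conjI[OF Lsub], rule ballI)
      fix x assume x: "x \<in> lists (Sigma C)"
      show "(x \<in> L \<longleftrightarrow> 1 - p' \<le> prob_accept A.C' x) \<and> (x \<notin> L \<longleftrightarrow> prob_accept A.C' x \<le> p')"
      proof (cases "x = []")
        case True
        have "x \<in> L" using tsx[OF x] True prob_accept_nil[of C] assms by simp
        then show ?thesis using True prob_accept_nil[of A.C'] assms by simp
      next
        case False
        then show ?thesis using main_x[OF x] p'lt by auto
      qed
    qed
    show "has_time A.C' T'" unfolding has_time_def A.Sigma_C'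
    proof (intro allI impI)
      fix x cs assume xs: "set x \<subseteq> Sigma C" and cs: "cs \<in> coin_seqs (length x) (length cs)"
        and acc: "all_acc A.C' (conf A.C' x cs)"
        and nacc: "\<forall>k<length cs. \<not> all_acc A.C' (conf A.C' x (take k cs))"
      show "length cs < T' (length x)"
      proof (cases "length x = 0")
        case True
        have "length cs = 0"
        proof (rule ccontr)
          assume "length cs \<noteq> 0"
          then have "\<not> all_acc A.C' (conf A.C' x (take 0 cs))" using spec[OF nacc, of 0] by simp
          then show False using True by (simp add: all_acc_def)
        qed
        then show ?thesis using True T0[OF assms(6)] Tf0 by (simp add: T'_def)
      next
        case False
        define oo where "oo = A.opts ! (length cs - m * E)"
        have A: "length cs < A.Tf" "h + 1 \<le> card {j. j < m \<and> oo ! j < E}"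
          "\<And>j. j < m \<Longrightarrow> oo ! j < E \<Longrightarrow> all_acc C (conf C x (take (oo ! j) (drop (j * E) cs)))"
          using iffD1[OF A.acc_iff[OF xs, of cs] acc] False unfolding oo_def by auto
        have "T (length x) \<noteq> 0"
        proof
          assume T0': "T (length x) = 0"
          have "{j. j < m \<and> oo ! j < E} \<noteq> {}"
          proof
            assume e: "{j. j < m \<and> oo ! j < E} = {}"
            show False using A(2) unfolding e by simp
          qed
          then obtain j where j: "j < m" "oo ! j < E" by blast
          let ?c = "take (oo ! j) (drop (j * E) cs)"
          have "?c \<in> coin_seqs (length x) (length ?c)"
            using cs by (auto simp: coin_seqs_def dest: in_set_takeD in_set_dropD)
          from first_acc[OF assms(6) xs this A(3)[OF j]] T0' show False by simp
        qed
        then show ?thesis using A(1) by (simp add: T'_def)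
      qed
    qed
    show "(\<lambda>n. real (T' n)) \<in> O(\<lambda>n. real (T n))"
    proof (rule landau_o.bigI[of "real A.Tf"])
      show "0 < real A.Tf" using Tf0 by simp
      show "\<forall>\<^sub>F n in at_top. norm (real (T' n)) \<le> real A.Tf * norm (real (T n))"
      proof (rule always_eventually, rule allI)
        fix n
        show "norm (real (T' n)) \<le> real A.Tf * norm (real (T n))"
        proof (cases "T n = 0")
          case False
          then have "real A.Tf * 1 \<le> real A.Tf * real (T n)" by (intro mult_left_mono) auto
          then show ?thesis using False by (simp add: T'_def)
        qed (simp add: T'_def)
      qed
    qed
  qed
qed

end
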